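(* Let $x_0\in E$. The $s$-inversion $I$ of $E$ with fixed point $x_0$ is as follows. (1) If $-\infty<s(l)$, $s(r)<\infty$ and $2s(x_0)\neq s(l)+s(r)$: $I$ is given by the formulas $I(x)=s^{-1}(s^2(x_0)/s(x))$ if $s^2(x_0)=s(l)s(r)$, and $I(x)=s^{-1}((s(x)+a)/(bs(x)-1))$ otherwise, with $a=\frac{(2s(l)s(r)-s(x_0)(s(l)+s(r)))s(x_0)}{s^2(x_0)-s(l)s(r)}$, $b=\frac{2s(x_0)-(s(l)+s(r))}{s^2(x_0)-s(l)s(r)}$. (2) If $-\infty<s(l)$ and $s(r)=+\infty$: $I(x)=s^{-1}\Big(s(l)+\dfrac{(s(x_0)-s(l))^2}{s(x)-s(l)}\Big)$. (3) If $s(l)=-\infty$ and $s(r)<+\infty$: $I(x)=s^{-1}\Big(s(r)-\dfrac{(s(r)-s(x_0))^2}{s(r)-s(x)}\Big)$. (4) If $s(l)=-\infty$ and $s(r)=+\infty$, or if $s$ is bounded and $2s(x_0)=s(l)+s(r)$: $I$ is the $s$-reflection in $x_0$, i.e. $I(x)=s^{-1}(2s(x_0)-s(x))$.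
   Context: Setting: $E=(l,r)$, $-\infty\le l<r\le\infty$; $X$ is a diffusion on $E$ solving $dX_t=\sigma(X_t)dW_t+b(X_t)dt$ with $\sigma\neq0$, $1/\sigma^2,b/\sigma^2\in L^1_{loc}(E)$, killed upon hitting $l$ or $r$. Its scale function is $s(x)=\int_c^x\exp(-2\int_c^z b/\sigma^2)\,dz$ (continuous, strictly increasing), $s^{-1}$ its inverse, $s(l),s(r)\in[-\infty,\infty]$ its limits at the endpoints. Let $\mathcal{MI}$ be the set of real Möbius involutions $\omega(y)=(ay+b)/(cy-a)$ with $a,b,c\in\mathbb{R}$, $a^2+bc>0$. Definition: for $x_0\in E$, a map $I:E\to E$ is the $s$-inversion with fixed point $x_0$ if (i) $I\circ I=\mathrm{id}_E$; (ii) $s\circ I\circ s^{-1}$ is (the restriction to $s(E)$ of) an element of $\mathcal{MI}$ or the reflection $y\mapsto 2s(x_0)-y$; (iii) $I(E)=E$; (iv) $I(x_0)=x_0$. If $s\circ I\circ s^{-1}(y)=2s(x_0)-y$, $I$ is the $s$-reflection in $x_0$. *)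

theory Defs
  imports "HOL-Analysis.Analysis"
begin

definition Eset :: "ereal \<Rightarrow> ereal \<Rightarrow> real set" where
  "Eset l r = {x. l < ereal x \<and> ereal x < r}"

definition scale_fun :: "(real \<Rightarrow> real) \<Rightarrow> (real \<Rightarrow> real) \<Rightarrow> real \<Rightarrow> real \<Rightarrow> real" where
  "scale_fun \<sigma> b c x =
     (LBINT z=ereal c..ereal x. exp (-2 * (LBINT u=ereal c..ereal z. b u / (\<sigma> u)^2)))"

definition left_end :: "ereal \<Rightarrow> real filter" where
  "left_end l = (if l = -\<infinity> then at_bot else at_right (real_of_ereal l))"

definition right_end :: "ereal \<Rightarrow> real filter" where
  "right_end r = (if r = \<infinity> then at_top else at_left (real_of_ereal r))"

text \<open>s-inversion of E with fixed point x0 (conditions (i)-(iv)); the Moebius involution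
  y \<mapsto> (a y + b)/(c y - a), a^2+bc>0, must be defined (no pole) on s(E).\<close>
definition s_inversion :: "(real \<Rightarrow> real) \<Rightarrow> real set \<Rightarrow> real \<Rightarrow> (real \<Rightarrow> real) \<Rightarrow> bool" where
  "s_inversion s E x0 I \<longleftrightarrow>
     (\<forall>x\<in>E. I (I x) = x) \<and>
     ((\<exists>a b c. a^2 + b * c > 0 \<and>
         (\<forall>y\<in>s ` E. c * y - a \<noteq> 0 \<and> s (I (inv_into E s y)) = (a * y + b) / (c * y - a)))
      \<or> (\<forall>y\<in>s ` E. s (I (inv_into E s y)) = 2 * s x0 - y)) \<and>
     I ` E = E \<and>
     I x0 = x0"

end

theory Submission
  imports Defs
begin


definition mob :: "real \<Rightarrow> real \<Rightarrow> real \<Rightarrow> real" where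
  "mob p K y = p + K / (y - p)"

lemma dens1:
  fixes L R A :: real
  assumes "L < R" "\<forall>y. L < y \<and> y < R \<longrightarrow> A < y" shows "A \<le> L"
proof (rule ccontr)
  assume "\<not> A \<le> L"
  then have "L < min A R" using assms by auto
  then show False using assms(2)[rule_format, of "(L + min A R)/2"] by (auto simp: min_def split: if_splits)
qed

lemma dens2:
  fixes L R A :: real
  assumes "L < R" "\<forall>y. L < y \<and> y < R \<longrightarrow> y < A" shows "R \<le> A"
proof (rule ccontr)
  assume "\<not> R \<le> A"
  then have "max A L < R" using assms by auto
  then show False using assms(2)[rule_format, of "(R + max A L)/2"] by (auto simp: max_def split: if_splits)
qed

lemma dens3:
  fixes L A :: real
  assumes "\<forall>y. L < y \<longrightarrow> y < A" shows False
proof -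
  have "L < max L A + 1" "\<not> max L A + 1 < A" by auto
  then show False using assms by blast
qed

lemma dens4:
  fixes R A :: real
  assumes "\<forall>y. y < R \<longrightarrow> A < y" shows False
proof -
  have "min R A - 1 < R" "\<not> A < min R A - 1" by auto
  then show False using assms by blast
qed

lemma mob_fix:
  assumes "K > 0" "mob p K S = S" "S \<noteq> p" shows "(S - p)^2 = K"
proof -
  have "S \<noteq> p" using assms by (auto simp: mob_def)
  then show ?thesis using assms by (auto simp: mob_def field_simps power2_eq_square)
qed

lemma M_both:
  fixes L R p K S0 :: real
  assumes LR: "L < R" and S0: "L < S0" "S0 < R" and K: "K > 0" and p: "\<not> (L < p \<and> p < R)"
    and into: "\<forall>y. L < y \<and> y < R \<longrightarrow> L < mob p K y \<and> mob p K y < R"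
    and fx: "mob p K S0 = S0"
  shows "p < L \<or> R < p" "K = (L - p) * (R - p)"
proof -
  have "p < L \<and> K = (L - p) * (R - p) \<or> R < p \<and> K = (L - p) * (R - p)"
  proof (cases "p \<le> L")
    case True
    have a: "\<forall>y. L < y \<and> y < R \<longrightarrow> p + K / (R - p) < y"
    proof (intro allI impI)
      fix y assume y: "L < y \<and> y < R"
      then have "p + K / (y - p) < R" using into by (auto simp: mob_def)
      moreover have "y - p > 0" "R - p > 0" using y True by auto
      ultimately have "K < (R - p) * (y - p)" by (simp add: field_simps)
      then have "K / (R - p) < y - p" using \<open>R - p > 0\<close> by (simp add: field_simps)
      then show "p + K / (R - p) < y" by simp
    qed
    have "p + K / (R - p) \<le> L" by (rule dens1[OF LR a])
    then have k1: "K \<le> (L - p) * (R - p)" using True LR by (simp add: field_simps)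
    then have "p < L" using True K by (cases "p = L") auto
    have b: "\<forall>y. L < y \<and> y < R \<longrightarrow> y < p + K / (L - p)"
    proof (intro allI impI)
      fix y assume y: "L < y \<and> y < R"
      then have "L < p + K / (y - p)" using into by (auto simp: mob_def)
      moreover have "y - p > 0" "L - p > 0" using y \<open>p < L\<close> by auto
      ultimately have "(L - p) * (y - p) < K" by (simp add: field_simps)
      then have "y - p < K / (L - p)" using \<open>L - p > 0\<close> by (simp add: field_simps)
      then show "y < p + K / (L - p)" by simp
    qed
    have "R \<le> p + K / (L - p)" by (rule dens2[OF LR b])
    then have "(L - p) * (R - p) \<le> K" using \<open>p < L\<close> by (simp add: field_simps)
    then show ?thesis using k1 \<open>p < L\<close> by auto
  next
    case False
    then have "R \<le> p" using p by auto
    have a: "\<forall>y. L < y \<and> y < R \<longrightarrow> y < p + K / (L - p)"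
    proof (intro allI impI)
      fix y assume y: "L < y \<and> y < R"
      then have "L < p + K / (y - p)" using into by (auto simp: mob_def)
      moreover have "y - p < 0" "L - p < 0" using y \<open>R \<le> p\<close> by auto
      ultimately have "K < (L - p) * (y - p)" by (simp add: field_simps)
      then have "y - p < K / (L - p)" using \<open>L - p < 0\<close> by (simp add: field_simps)
      then show "y < p + K / (L - p)" by simp
    qed
    have "R \<le> p + K / (L - p)" by (rule dens2[OF LR a])
    then have k1: "K \<le> (L - p) * (R - p)" using \<open>R \<le> p\<close> LR by (simp add: field_simps)
    then have "R < p" using \<open>R \<le> p\<close> K by (cases "p = R") auto
    have b: "\<forall>y. L < y \<and> y < R \<longrightarrow> p + K / (R - p) < y"
    proof (intro allI impI)
      fix y assume y: "L < y \<and> y < R"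
      then have "p + K / (y - p) < R" using into by (auto simp: mob_def)
      moreover have "y - p < 0" "R - p < 0" using y \<open>R < p\<close> by auto
      ultimately have "(R - p) * (y - p) < K" by (simp add: field_simps)
      then have "K / (R - p) < y - p" using \<open>R - p < 0\<close> by (simp add: field_simps)
      then show "p + K / (R - p) < y" by simp
    qed
    have "p + K / (R - p) \<le> L" by (rule dens1[OF LR b])
    then have "(L - p) * (R - p) \<le> K" using \<open>R < p\<close> by (simp add: field_simps)
    then show ?thesis using k1 \<open>R < p\<close> by auto
  qed
  then show "p < L \<or> R < p" "K = (L - p) * (R - p)" by auto
qed

lemma mob_alt:
  fixes p K y :: real
  assumes "p \<noteq> 0" "y \<noteq> p"
  shows "(y + (K - p^2) / p) / (y / p - 1) = mob p K y"
proof -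
  have "y - p \<noteq> 0" using assms by simp
  then show ?thesis using assms by (simp add: mob_def field_simps power2_eq_square)
qed

lemma aux_nd:
  fixes N d S0 :: real
  assumes "N \<noteq> 0" "d \<noteq> 0"
  shows "S0 * (S0 - 2 * (N / d)) / (N / d) = S0 * (S0 * d - 2 * N) / N"
  using assms by (simp add: field_simps)

lemma C1:
  fixes L R S0 :: real
  assumes S0: "L < S0" "S0 < R" and d: "2 * S0 \<noteq> L + R"
  defines "p \<equiv> (L * R - S0^2) / (L + R - 2 * S0)"
  defines "K \<equiv> (L - p) * (R - p)"
  shows "(S0 - p)^2 = K" "K > 0" "p < L \<or> R < p"
    "\<And>y. y \<noteq> p \<Longrightarrow> (if S0^2 = L * R then S0^2 / y
      else (let A = ((2 * L * R - S0 * (L + R)) * S0) / (S0^2 - L * R);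
                B = (2 * S0 - (L + R)) / (S0^2 - L * R)
            in (y + A) / (B * y - 1))) = mob p K y"
proof -
  have dn: "L + R - 2 * S0 \<noteq> 0" using d by auto
  have pe: "p * (L + R - 2 * S0) = L * R - S0^2" using dn by (simp add: p_def)
  show sq: "(S0 - p)^2 = K" unfolding K_def using pe by (simp add: power2_eq_square algebra_simps)
  have "S0 \<noteq> p"
  proof
    assume "S0 = p"
    then have "(L - p) * (R - p) = 0" using sq by (simp add: K_def)
    then show False using S0 \<open>S0 = p\<close> by auto
  qed
  then show Kp: "K > 0" using sq by (metis diff_self_eq_0 right_minus_eq zero_less_power2)
  show "p < L \<or> R < p"
  proof (rule ccontr)
    assume "\<not> (p < L \<or> R < p)"
    then have "L - p \<le> 0" "R - p \<ge> 0" by auto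
    then have "(L - p) * (R - p) \<le> 0" by (simp add: mult_nonpos_nonneg)
    then show False using Kp K_def by simp
  qed
  fix y assume y: "y \<noteq> p"
  show "(if S0^2 = L * R then S0^2 / y
      else (let A = ((2 * L * R - S0 * (L + R)) * S0) / (S0^2 - L * R);
                B = (2 * S0 - (L + R)) / (S0^2 - L * R)
            in (y + A) / (B * y - 1))) = mob p K y"
  proof (cases "S0^2 = L * R")
    case True
    then have "p = 0" by (simp add: p_def)
    then show ?thesis using True sq by (simp add: mob_def)
  next
    case False
    have N: "S0^2 - L * R \<noteq> 0" using False by simp
    have p0: "p \<noteq> 0" using False dn by (simp add: p_def)
    have B: "(2 * S0 - (L + R)) / (S0^2 - L * R) = 1 / p"
      using N dn by (simp add: p_def field_simps)
    have A: "((2 * L * R - S0 * (L + R)) * S0) / (S0^2 - L * R) = (K - p^2) / p"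
    proof -
      have "K - p^2 = S0^2 - 2 * S0 * p" using sq by (simp add: power2_eq_square algebra_simps)
      also have "\<dots> = S0 * (S0 - 2 * p)" by (simp add: algebra_simps power2_eq_square)
      finally have e: "(K - p^2) / p = S0 * (S0 - 2 * p) / p" by simp
      have N': "L * R - S0^2 \<noteq> 0" using N by simp
      have "S0 * (S0 - 2 * p) / p = S0 * (S0 * (L + R - 2 * S0) - 2 * (L * R - S0^2)) / (L * R - S0^2)"
        unfolding p_def using aux_nd[OF N' dn] by simp
      also have "\<dots> = ((2 * L * R - S0 * (L + R)) * S0) / (S0^2 - L * R)"
        using N N' by (simp add: field_simps power2_eq_square)
      finally show ?thesis unfolding e by simp
    qed
    show ?thesis using False p0 y unfolding Let_def A B using mob_alt[OF p0 y, of K] by simp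
  qed
qed

definition Jset :: "ereal \<Rightarrow> ereal \<Rightarrow> real set" where
  "Jset sl sr = {y. sl < ereal y \<and> ereal y < sr}"

definition psi :: "ereal \<Rightarrow> ereal \<Rightarrow> real \<Rightarrow> real \<Rightarrow> real" where
  "psi sl sr S0 y =
      (let L = real_of_ereal sl; R = real_of_ereal sr in
       if sl \<noteq> -\<infinity> \<and> sr \<noteq> \<infinity> \<and> 2 * S0 \<noteq> L + R then
         (if S0^2 = L * R then S0^2 / y
          else (let A = ((2 * L * R - S0 * (L + R)) * S0) / (S0^2 - L * R);
                    B = (2 * S0 - (L + R)) / (S0^2 - L * R)
                in (y + A) / (B * y - 1)))
       else if sl \<noteq> -\<infinity> \<and> sr = \<infinity> then L + (S0 - L)^2 / (y - L)
       else if sl = -\<infinity> \<and> sr \<noteq> \<infinity> then R - (R - S0)^2 / (R - y)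
       else 2 * S0 - y)"

lemma mob_invol:
  assumes "K > 0" "y \<noteq> p" shows "mob p K y \<noteq> p" "mob p K (mob p K y) = y"
proof -
  have "y - p \<noteq> 0" using assms by simp
  then show "mob p K y \<noteq> p" using assms by (simp add: mob_def)
  show "mob p K (mob p K y) = y" using \<open>y - p \<noteq> 0\<close> assms by (simp add: mob_def field_simps)
qed

lemma mob_moeb:
  assumes "K > 0" "y \<noteq> p"
  shows "1 * y - p \<noteq> 0" "mob p K y = (p * y + (K - p^2)) / (1 * y - p)"
proof -
  show "1 * y - p \<noteq> 0" using assms by simp
  then show "mob p K y = (p * y + (K - p^2)) / (1 * y - p)"
    by (simp add: mob_def field_simps power2_eq_square)
qed

lemma mob_into:
  fixes L R p y :: real
  assumes "p < L \<or> R < p" "L < y" "y < R"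
  shows "L < mob p ((L - p) * (R - p)) y \<and> mob p ((L - p) * (R - p)) y < R"
  using assms(1)
proof
  assume "p < L"
  then have a: "0 < (L - p) * (R - y)" "0 < (R - p) * (y - L)" using assms by auto
  have "y - p > 0" using assms \<open>p < L\<close> by auto
  then show ?thesis using a by (simp add: mob_def field_simps algebra_simps)
next
  assume "R < p"
  then have a: "(L - p) * (R - y) < 0" "(R - p) * (y - L) < 0" using assms
    by (auto simp: mult_neg_pos)
  have "y - p < 0" using assms \<open>R < p\<close> by auto
  then show ?thesis using a by (simp add: mob_def field_simps algebra_simps)
qed

lemma ereal_cases2:
  fixes sl :: ereal and S0 :: real
  assumes "sl < ereal S0"
  obtains (fin) L where "sl = ereal L" | (inf) "sl = -\<infinity>"
  using assms by (cases sl) auto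

lemma ereal_cases3:
  fixes sr :: ereal and S0 :: real
  assumes "ereal S0 < sr"
  obtains (fin) R where "sr = ereal R" | (inf) "sr = \<infinity>"
  using assms by (cases sr) auto

lemma psi_form:
  assumes sl: "sl < ereal S0" and sr: "ereal S0 < sr"
  shows "(\<exists>p K. K > 0 \<and> p \<notin> Jset sl sr \<and> S0 \<noteq> p \<and> mob p K S0 = S0 \<and>
            (\<forall>y\<in>Jset sl sr. psi sl sr S0 y = mob p K y \<and> mob p K y \<in> Jset sl sr))
       \<or> (\<forall>y\<in>Jset sl sr. psi sl sr S0 y = 2 * S0 - y \<and> 2 * S0 - y \<in> Jset sl sr)"
proof (cases sl)
  case (real L)
  note Lf = real
  show ?thesis
  proof (cases sr)
    case (real R)
    note fin = real
    have LS: "L < S0" "S0 < R" using sl sr Lf fin by auto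
    have J: "Jset sl sr = {L<..<R}" using Lf fin by (auto simp: Jset_def)
    show ?thesis
    proof (cases "2 * S0 = L + R")
      case True
      then have "psi sl sr S0 y = 2 * S0 - y" for y using Lf fin by (simp add: psi_def)
      then show ?thesis using True unfolding J by auto
    next
      case False
      define p where "p = (L * R - S0^2) / (L + R - 2 * S0)"
      define K where "K = (L - p) * (R - p)"
      note c = C1[OF LS False, folded p_def, folded K_def]
      have pJ: "p \<notin> Jset sl sr" using c(3) J by auto
      have "S0 \<noteq> p" using c(3) LS by auto
      have "K / (S0 - p) = S0 - p" using c(1)[symmetric] \<open>S0 \<noteq> p\<close> by (simp add: power2_eq_square)
      then have "mob p K S0 = S0" by (simp add: mob_def)
      moreover have "\<forall>y\<in>Jset sl sr. psi sl sr S0 y = mob p K y \<and> mob p K y \<in> Jset sl sr"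
      proof
        fix y assume y: "y \<in> Jset sl sr"
        then have "y \<noteq> p" using pJ by auto
        have "psi sl sr S0 y = mob p K y" using c(4)[OF \<open>y \<noteq> p\<close>] False Lf fin
          by (simp add: psi_def)
        moreover have "mob p K y \<in> Jset sl sr" using mob_into[OF c(3)] y J K_def by auto
        ultimately show "psi sl sr S0 y = mob p K y \<and> mob p K y \<in> Jset sl sr" by simp
      qed
      ultimately show ?thesis using c(2) pJ \<open>S0 \<noteq> p\<close> by blast
    qed
  next
    case MInf then show ?thesis using sr by simp
  next
    case PInf
    note inf = PInf
    have LS: "L < S0" using sl Lf by auto
    have J: "Jset sl sr = {L<..}" using Lf inf by (auto simp: Jset_def)
    define K where "K = (S0 - L)^2"
    have K: "K > 0" using LS by (simp add: K_def)
    have "mob L K S0 = S0" using LS by (simp add: mob_def K_def power2_eq_square)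
    moreover have "\<forall>y\<in>Jset sl sr. psi sl sr S0 y = mob L K y \<and> mob L K y \<in> Jset sl sr"
      using Lf inf K unfolding J by (auto simp: psi_def mob_def K_def)
    ultimately show ?thesis using K J LS by force
  qed
next
  case PInf then show ?thesis using sl by simp
next
  case MInf
  note Li = MInf
  show ?thesis
  proof (cases sr)
    case (real R)
    note fin = real
    have RS: "S0 < R" using sr fin by auto
    have J: "Jset sl sr = {..<R}" using Li fin by (auto simp: Jset_def)
    define K where "K = (R - S0)^2"
    have K: "K > 0" using RS by (simp add: K_def)
    have "mob R K S0 = S0" using RS by (simp add: mob_def K_def power2_eq_square field_simps)
    moreover have "\<forall>y\<in>Jset sl sr. psi sl sr S0 y = mob R K y \<and> mob R K y \<in> Jset sl sr"
    proof
      fix y assume "y \<in> Jset sl sr"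
      then have y: "y < R" using J by auto
      have "R - K / (R - y) = R + K / (y - R)"
        by (metis minus_diff_eq divide_minus_right diff_conv_add_uminus)
      moreover have "K / (y - R) < 0" using K y by (simp add: divide_pos_neg)
      ultimately show "psi sl sr S0 y = mob R K y \<and> mob R K y \<in> Jset sl sr"
        using Li fin unfolding J by (auto simp: psi_def mob_def K_def)
    qed
    ultimately show ?thesis using K J RS by force
  next
    case MInf then show ?thesis using sr by simp
  next
    case PInf
    note inf = PInf
    have "psi sl sr S0 y = 2 * S0 - y" for y using Li inf by (simp add: psi_def)
    then show ?thesis using Li inf by (auto simp: Jset_def)
  qed
qed

lemma moeb_norm:
  fixes a b c y :: real
  assumes "c \<noteq> 0" "c * y - a \<noteq> 0"
  shows "(a * y + b) / (c * y - a) = mob (a / c) ((a^2 + b * c) / c^2) y"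
proof -
  have "y - a / c \<noteq> 0" using assms by (auto simp: field_simps)
  then show ?thesis using assms by (simp add: mob_def field_simps power2_eq_square)
qed

lemma refl_unique:
  assumes sl: "sl < ereal S0" and sr: "ereal S0 < sr"
    and into: "\<forall>y\<in>Jset sl sr. 2 * S0 - y \<in> Jset sl sr"
  shows "\<forall>y\<in>Jset sl sr. 2 * S0 - y = psi sl sr S0 y"
proof (cases sl)
  case (real L)
  note Lf = real
  show ?thesis
  proof (cases sr)
    case (real R)
    have LR: "L < R" using sl sr Lf real by auto
    have a: "\<forall>y. L < y \<and> y < R \<longrightarrow> y < 2 * S0 - L"
      using into Lf real by (auto simp: Jset_def)
    have b: "\<forall>y. L < y \<and> y < R \<longrightarrow> 2 * S0 - R < y"
      using into Lf real by (auto simp: Jset_def)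
    have "2 * S0 = L + R" using dens1[OF LR b] dens2[OF LR a] by simp
    then show ?thesis using Lf real by (simp add: psi_def)
  next
    case PInf
    have "\<forall>y. L < y \<longrightarrow> y < 2 * S0 - L" using into Lf PInf by (auto simp: Jset_def)
    then show ?thesis using dens3 by blast
  next
    case MInf then show ?thesis using sr by simp
  qed
next
  case PInf then show ?thesis using sl by simp
next
  case MInf
  show ?thesis
  proof (cases sr)
    case (real R)
    have "\<forall>y. y < R \<longrightarrow> 2 * S0 - R < y" using into MInf real by (auto simp: Jset_def)
    then show ?thesis using dens4 by blast
  next
    case PInf
    then show ?thesis using MInf by (simp add: psi_def)
  next
    case MInf then show ?thesis using sr by simp
  qed
qed

lemma mob_unique:
  assumes sl: "sl < ereal S0" and sr: "ereal S0 < sr"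
    and K: "K > 0" and pJ: "p \<notin> Jset sl sr"
    and into: "\<forall>y\<in>Jset sl sr. mob p K y \<in> Jset sl sr" and fx: "mob p K S0 = S0"
  shows "\<forall>y\<in>Jset sl sr. mob p K y = psi sl sr S0 y"
proof -
  have S0J: "S0 \<in> Jset sl sr" using sl sr by (simp add: Jset_def)
  then have "S0 \<noteq> p" using pJ by auto
  have sq: "(S0 - p)^2 = K" by (rule mob_fix[OF K fx \<open>S0 \<noteq> p\<close>])
  show ?thesis
  proof (cases sl)
    case (real L)
    note Lf = real
    show ?thesis
    proof (cases sr)
      case (real R)
      have LR: "L < R" and LS: "L < S0" "S0 < R" using sl sr Lf real by auto
      have into': "\<forall>y. L < y \<and> y < R \<longrightarrow> L < mob p K y \<and> mob p K y < R"
        using into Lf real by (auto simp: Jset_def)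
      have pn: "\<not> (L < p \<and> p < R)" using pJ Lf real by (auto simp: Jset_def)
      note mb = M_both[OF LR LS K pn into' fx]
      have pe: "p * (L + R - 2 * S0) = L * R - S0^2"
        using sq mb(2) by (simp add: power2_eq_square algebra_simps)
      have d: "2 * S0 \<noteq> L + R"
      proof
        assume e: "2 * S0 = L + R"
        then have "S0^2 = L * R" using pe by simp
        have "(L - R)^2 = (L + R)^2 - 4 * (L * R)" by (simp add: power2_eq_square algebra_simps)
        also have "\<dots> = (2 * S0)^2 - 4 * S0^2" using e \<open>S0^2 = L * R\<close> by simp
        also have "\<dots> = 0" by (simp add: power2_eq_square)
        finally have "(L - R)^2 = 0" .
        then show False using LR by simp
      qed
      have pdef: "p = (L * R - S0^2) / (L + R - 2 * S0)" using pe d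
        by (simp add: field_simps)
      note c = C1[OF LS d, folded pdef, folded mb(2)]
      show ?thesis
      proof
        fix y assume y: "y \<in> Jset sl sr"
        then have "y \<noteq> p" using pJ by auto
        show "mob p K y = psi sl sr S0 y" using c(4)[OF \<open>y \<noteq> p\<close>] d Lf real
          by (simp add: psi_def)
      qed
    next
      case PInf
      have LS: "L < S0" using sl Lf by auto
      have pL: "p \<le> L" using pJ Lf PInf by (auto simp: Jset_def)
      have "p = L"
      proof (rule ccontr)
        assume "p \<noteq> L"
        then have "p < L" using pL by simp
        have "\<forall>y. L < y \<longrightarrow> y < p + K / (L - p)"
        proof (intro allI impI)
          fix y assume y: "L < y"
          then have "L < p + K / (y - p)" using into Lf PInf by (auto simp: Jset_def mob_def)
          moreover have "y - p > 0" "L - p > 0" using y \<open>p < L\<close> by auto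
          ultimately have "(L - p) * (y - p) < K" by (simp add: field_simps)
          then have "y - p < K / (L - p)" using \<open>L - p > 0\<close> by (simp add: field_simps)
          then show "y < p + K / (L - p)" by simp
        qed
        then show False using dens3 by blast
      qed
      then show ?thesis using sq Lf PInf by (auto simp: psi_def mob_def)
    next
      case MInf then show ?thesis using sr by simp
    qed
  next
    case PInf then show ?thesis using sl by simp
  next
    case MInf
    note Li = MInf
    show ?thesis
    proof (cases sr)
      case (real R)
      have RS: "S0 < R" using sr real by auto
      have pR: "R \<le> p" using pJ Li real by (auto simp: Jset_def)
      have "p = R"
      proof (rule ccontr)
        assume "p \<noteq> R"
        then have "R < p" using pR by simp
        have "\<forall>y. y < R \<longrightarrow> p + K / (R - p) < y"
        proof (intro allI impI)
          fix y assume y: "y < R"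
          then have "p + K / (y - p) < R" using into Li real by (auto simp: Jset_def mob_def)
          moreover have "y - p < 0" "R - p < 0" using y \<open>R < p\<close> by auto
          ultimately have "(R - p) * (y - p) < K" by (simp add: field_simps)
          then have "K / (R - p) < y - p" using \<open>R - p < 0\<close> by (simp add: field_simps)
          then show "p + K / (R - p) < y" by simp
        qed
        then show False using dens4 by blast
      qed
      show ?thesis
      proof
        fix y assume "y \<in> Jset sl sr"
        then have y: "y < R" using Li real by (simp add: Jset_def)
        have K': "K = (R - S0)^2" using sq \<open>p = R\<close> by (simp add: power2_commute)
        have "R - K / (R - y) = R + K / (y - R)"
          by (metis minus_diff_eq divide_minus_right diff_conv_add_uminus)
        then show "mob p K y = psi sl sr S0 y" using Li real \<open>p = R\<close> K'
          by (simp add: psi_def mob_def)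
      qed
    next
      case PInf
      then have "p \<in> Jset sl sr" using Li by (simp add: Jset_def)
      then show ?thesis using pJ by simp
    next
      case MInf then show ?thesis using sr by simp
    qed
  qed
qed

lemma psi_unique:
  assumes sl: "sl < ereal S0" and sr: "ereal S0 < sr"
    and into: "\<forall>y\<in>Jset sl sr. \<phi> y \<in> Jset sl sr" and fx: "\<phi> S0 = S0"
    and form: "(\<exists>a b c. a^2 + b * c > 0 \<and> (\<forall>y\<in>Jset sl sr. c * y - a \<noteq> 0 \<and> \<phi> y = (a * y + b) / (c * y - a)))
               \<or> (\<forall>y\<in>Jset sl sr. \<phi> y = 2 * S0 - y)"
  shows "\<forall>y\<in>Jset sl sr. \<phi> y = psi sl sr S0 y"
proof -
  have S0J: "S0 \<in> Jset sl sr" using sl sr by (simp add: Jset_def)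
  have refl_case: ?thesis if q: "\<forall>y\<in>Jset sl sr. \<phi> y = 2 * q - y" for q
  proof -
    have "q = S0" using q[rule_format, OF S0J] fx by simp
    then have "\<forall>y\<in>Jset sl sr. 2 * S0 - y \<in> Jset sl sr" using into q by auto
    from refl_unique[OF sl sr this] show ?thesis using q \<open>q = S0\<close> by auto
  qed
  from form show ?thesis
  proof
    assume "\<exists>a b c. a^2 + b * c > 0 \<and> (\<forall>y\<in>Jset sl sr. c * y - a \<noteq> 0 \<and> \<phi> y = (a * y + b) / (c * y - a))"
    then obtain a b c where abc: "a^2 + b * c > 0"
      and h: "\<forall>y\<in>Jset sl sr. c * y - a \<noteq> 0 \<and> \<phi> y = (a * y + b) / (c * y - a)" by blast
    show ?thesis
    proof (cases "c = 0")
      case True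
      then have "a \<noteq> 0" using abc by auto
      have "\<forall>y\<in>Jset sl sr. \<phi> y = 2 * (- b / (2 * a)) - y"
        using h True \<open>a \<noteq> 0\<close> by (auto simp: field_simps)
      then show ?thesis by (rule refl_case)
    next
      case False
      define p where "p = a / c"
      define K where "K = (a^2 + b * c) / c^2"
      have K: "K > 0" using abc False by (simp add: K_def)
      have eq: "\<forall>y\<in>Jset sl sr. \<phi> y = mob p K y"
        using h moeb_norm[OF False] by (simp add: p_def K_def)
      have pJ: "p \<notin> Jset sl sr"
      proof
        assume "p \<in> Jset sl sr"
        then have "c * p - a \<noteq> 0" using h by blast
        then show False using False by (simp add: p_def)
      qed
      have into': "\<forall>y\<in>Jset sl sr. mob p K y \<in> Jset sl sr" using into eq by auto
      have fx': "mob p K S0 = S0" using eq S0J fx by auto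
      show ?thesis using mob_unique[OF sl sr K pJ into' fx'] eq by auto
    qed
  next
    assume "\<forall>y\<in>Jset sl sr. \<phi> y = 2 * S0 - y"
    then show ?thesis by (rule refl_case)
  qed
qed

lemma Eset_conv:
  assumes "u \<in> Eset l r" "v \<in> Eset l r" "u \<le> x" "x \<le> v" shows "x \<in> Eset l r"
proof -
  have "l < ereal u" "ereal v < r" using assms(1,2) by (auto simp: Eset_def)
  moreover have "ereal u \<le> ereal x" "ereal x \<le> ereal v" using assms(3,4) by auto
  ultimately have "l < ereal x" "ereal x < r" by (order, order)
  then show ?thesis by (simp add: Eset_def)
qed

lemma Eset_below:
  assumes "x \<in> Eset l r" shows "\<exists>a\<in>Eset l r. a < x"
proof (cases l)
  case (real L)
  then have "L < x" using assms by (simp add: Eset_def)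
  then have "L < (L + x) / 2" "(L + x) / 2 < x" by auto
  have "ereal x < r" using assms by (simp add: Eset_def)
  moreover have "ereal ((L + x) / 2) < ereal x" using \<open>(L + x) / 2 < x\<close> by simp
  ultimately have "ereal ((L + x) / 2) < r" by order
  then have "(L + x) / 2 \<in> Eset l r" using real \<open>L < (L + x) / 2\<close> by (simp add: Eset_def)
  then show ?thesis using \<open>(L + x) / 2 < x\<close> by blast
next
  case PInf then show ?thesis using assms by (simp add: Eset_def)
next
  case MInf
  have "ereal (x - 1) < ereal x" by simp
  moreover have "ereal x < r" using assms by (simp add: Eset_def)
  ultimately have "ereal (x - 1) < r" by order
  then have "x - 1 \<in> Eset l r" using MInf by (simp add: Eset_def)
  then show ?thesis by (intro bexI[of _ "x - 1"]) auto
qed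

lemma Eset_above:
  assumes "x \<in> Eset l r" shows "\<exists>b\<in>Eset l r. x < b"
proof (cases r)
  case (real R)
  then have "x < R" using assms by (simp add: Eset_def)
  then have "(R + x) / 2 < R" "x < (R + x) / 2" by auto
  have "l < ereal x" using assms by (simp add: Eset_def)
  moreover have "ereal x < ereal ((R + x) / 2)" using \<open>x < (R + x) / 2\<close> by simp
  ultimately have "l < ereal ((R + x) / 2)" by order
  then have "(R + x) / 2 \<in> Eset l r" using real \<open>(R + x) / 2 < R\<close> by (simp add: Eset_def)
  then show ?thesis using \<open>x < (R + x) / 2\<close> by blast
next
  case MInf then show ?thesis using assms by (simp add: Eset_def)
next
  case PInf
  have "ereal x < ereal (x + 1)" by simp
  moreover have "l < ereal x" using assms by (simp add: Eset_def)
  ultimately have "l < ereal (x + 1)" by order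
  then have "x + 1 \<in> Eset l r" using PInf by (simp add: Eset_def)
  then show ?thesis by (intro bexI[of _ "x + 1"]) auto
qed

lemma Eset_around:
  assumes "x \<in> Eset l r" "c \<in> Eset l r"
  shows "\<exists>a b. a \<in> Eset l r \<and> b \<in> Eset l r \<and> a < x \<and> a < c \<and> x < b \<and> c < b"
proof -
  have m1: "min x c \<in> Eset l r" "max x c \<in> Eset l r" using assms by (auto simp: min_def max_def)
  obtain a where "a \<in> Eset l r" "a < min x c" using Eset_below[OF m1(1)] by blast
  moreover obtain b where "b \<in> Eset l r" "max x c < b" using Eset_above[OF m1(2)] by blast
  ultimately show ?thesis by auto
qed

lemma indef:
  fixes f :: "real \<Rightarrow> real"
  assumes int: "\<forall>u\<in>Eset l r. \<forall>v\<in>Eset l r. set_integrable lborel {u..v} f"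
    and c: "c \<in> Eset l r" and a: "a \<in> Eset l r" and b: "b \<in> Eset l r"
    and ac: "a \<le> c" and cb: "c \<le> b" and x: "a \<le> x" "x \<le> b"
  shows "(LBINT z=ereal c..ereal x. f z) = integral {a..x} f - integral {a..c} f"
proof -
  have fab: "f integrable_on {a..b}" using set_borel_integral_eq_integral(1) int a b by blast
  have xE: "x \<in> Eset l r" using Eset_conv[OF a b x] .
  show ?thesis
  proof (cases "c \<le> x")
    case True
    have "(LBINT z=ereal c..ereal x. f z) = (LBINT z:{c..x}. f z)" using True by (rule interval_integral_Icc)
    also have "\<dots> = integral {c..x} f" using set_borel_integral_eq_integral(2) int c xE by blast
    also have "\<dots> = integral {a..x} f - integral {a..c} f"
      using Henstock_Kurzweil_Integration.integral_combine[OF ac True integrable_subinterval_real[OF fab]] x by auto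
    finally show ?thesis .
  next
    case False
    have "(LBINT z=ereal c..ereal x. f z) = - (LBINT z=ereal x..ereal c. f z)"
      by (rule interval_integral_endpoints_reverse)
    also have "(LBINT z=ereal x..ereal c. f z) = (LBINT z:{x..c}. f z)" using False
      by (intro interval_integral_Icc) simp
    also have "\<dots> = integral {x..c} f" using set_borel_integral_eq_integral(2) int c xE by blast
    also have "integral {x..c} f = integral {a..c} f - integral {a..x} f"
      using Henstock_Kurzweil_Integration.integral_combine[OF x(1) _ integrable_subinterval_real[OF fab], of c] False cb by auto
    finally show ?thesis by simp
  qed
qed

lemma fab_int:
  fixes f :: "real \<Rightarrow> real"
  assumes int: "\<forall>u\<in>Eset l r. \<forall>v\<in>Eset l r. set_integrable lborel {u..v} f"
    and a: "a \<in> Eset l r" and b: "b \<in> Eset l r"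
  shows "f integrable_on {a..b}"
  using set_borel_integral_eq_integral(1) int a b by blast

lemma indef_cont:
  fixes f :: "real \<Rightarrow> real"
  assumes int: "\<forall>u\<in>Eset l r. \<forall>v\<in>Eset l r. set_integrable lborel {u..v} f"
    and c: "c \<in> Eset l r"
  shows "continuous_on (Eset l r) (\<lambda>x. LBINT z=ereal c..ereal x. f z)"
proof (rule continuous_at_imp_continuous_on, rule ballI)
  fix x assume x: "x \<in> Eset l r"
  obtain a b where ab: "a \<in> Eset l r" "b \<in> Eset l r" "a < x" "a < c" "x < b" "c < b"
    using Eset_around[OF x c] by blast
  have "continuous_on {a..b} (\<lambda>y. integral {a..y} f - integral {a..c} f)"
    by (intro continuous_intros indefinite_integral_continuous_1 fab_int[OF int ab(1,2)])
  then have "continuous_on {a..b} (\<lambda>y. LBINT z=ereal c..ereal y. f z)"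
    by (rule continuous_on_cong[THEN iffD1, rotated 2]) (use indef[OF int c ab(1,2)] ab in auto)
  then show "isCont (\<lambda>y. LBINT z=ereal c..ereal y. f z) x"
    using continuous_on_interior[of "{a..b}"] ab by auto
qed

lemma indef_deriv:
  fixes f :: "real \<Rightarrow> real"
  assumes int: "\<forall>u\<in>Eset l r. \<forall>v\<in>Eset l r. set_integrable lborel {u..v} f"
    and c: "c \<in> Eset l r" and fc: "continuous_on (Eset l r) f" and x: "x \<in> Eset l r"
  shows "((\<lambda>x. LBINT z=ereal c..ereal x. f z) has_real_derivative f x) (at x)"
proof -
  obtain a b where ab: "a \<in> Eset l r" "b \<in> Eset l r" "a < x" "a < c" "x < b" "c < b"
    using Eset_around[OF x c] by blast
  have sub: "{a..b} \<subseteq> Eset l r" using Eset_conv[OF ab(1,2)] by auto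
  have "((\<lambda>y. integral {a..y} f) has_real_derivative f x) (at x within {a..b})"
    by (rule integral_has_real_derivative) (use continuous_on_subset[OF fc sub] ab in auto)
  then have "((\<lambda>y. integral {a..y} f) has_real_derivative f x) (at x)"
    using at_within_interior[of x "{a..b}"] ab by auto
  then have "((\<lambda>y. integral {a..y} f - integral {a..c} f) has_real_derivative f x) (at x)"
    by (auto intro!: derivative_eq_intros)
  then show ?thesis
    by (rule has_field_derivative_transform_within_open[of _ _ _ "{a<..<b}"])
       (use ab indef[OF int c ab(1,2)] in auto)
qed


lemma scale_props:
  assumes c: "c \<in> Eset l r"
    and loc2: "\<forall>u\<in>Eset l r. \<forall>v\<in>Eset l r. set_integrable lborel {u..v} (\<lambda>x. b x / (\<sigma> x)^2)"
  shows "strict_mono_on (Eset l r) (scale_fun \<sigma> b c)" "continuous_on (Eset l r) (scale_fun \<sigma> b c)"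
proof -
  define G where "G = (\<lambda>z. LBINT u=ereal c..ereal z. b u / (\<sigma> u)^2)"
  define h where "h = (\<lambda>z. exp (-2 * G z))"
  have Gc: "continuous_on (Eset l r) G" unfolding G_def by (rule indef_cont[OF loc2 c])
  have hc: "continuous_on (Eset l r) h" unfolding h_def by (intro continuous_intros Gc)
  have hint: "\<forall>u\<in>Eset l r. \<forall>v\<in>Eset l r. set_integrable lborel {u..v} h"
  proof (intro ballI)
    fix u v assume uv: "u \<in> Eset l r" "v \<in> Eset l r"
    have "continuous_on {u..v} h"
    proof (cases "u \<le> v")
      case True
      then have "{u..v} \<subseteq> Eset l r" using Eset_conv[OF uv] by auto
      then show ?thesis using continuous_on_subset[OF hc] by blast
    next
      case False
      then show ?thesis by simp
    qed
    then show "set_integrable lborel {u..v} h"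
      unfolding set_integrable_def by (intro borel_integrable_compact) auto
  qed
  have sdef: "scale_fun \<sigma> b c = (\<lambda>x. LBINT z=ereal c..ereal x. h z)"
    by (simp add: fun_eq_iff scale_fun_def h_def G_def)
  have der: "\<And>x. x \<in> Eset l r \<Longrightarrow> (scale_fun \<sigma> b c has_real_derivative h x) (at x)"
    unfolding sdef by (rule indef_deriv[OF hint c hc])
  have hpos: "\<And>x. h x > 0" by (simp add: h_def)
  show "strict_mono_on (Eset l r) (scale_fun \<sigma> b c)"
  proof (rule strict_mono_onI)
    fix u v assume uv: "u \<in> Eset l r" "v \<in> Eset l r" "u < v"
    show "scale_fun \<sigma> b c u < scale_fun \<sigma> b c v"
      by (rule DERIV_pos_imp_increasing[OF uv(3)]) (use der hpos Eset_conv[OF uv(1,2)] in blast)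
  qed
  show "continuous_on (Eset l r) (scale_fun \<sigma> b c)"
    by (rule continuous_at_imp_continuous_on) (use der DERIV_isCont in blast)
qed

lemma left_ev:
  assumes "x1 \<in> Eset l r"
  shows "eventually (\<lambda>x. x \<in> Eset l r \<and> x \<le> x1) (left_end l)"
proof (cases l)
  case (real L)
  have L: "L < x1" using assms real by (simp add: Eset_def)
  have "\<forall>y>L. y < x1 \<longrightarrow> y \<in> Eset l r \<and> y \<le> x1"
  proof (intro allI impI)
    fix y assume "L < y" "y < x1"
    then have "ereal y < ereal x1" by simp
    moreover have "ereal x1 < r" using assms by (simp add: Eset_def)
    ultimately have "ereal y < r" by order
    then show "y \<in> Eset l r \<and> y \<le> x1" using real \<open>L < y\<close> \<open>y < x1\<close>
      by (simp add: Eset_def)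
  qed
  then show ?thesis using real L by (auto simp: left_end_def eventually_at_right_field)
next
  case PInf then show ?thesis using assms by (simp add: Eset_def)
next
  case MInf
  have "\<forall>y\<le>x1. y \<in> Eset l r \<and> y \<le> x1"
  proof (intro allI impI)
    fix y assume "y \<le> x1"
    then have "ereal y \<le> ereal x1" by simp
    moreover have "ereal x1 < r" using assms by (simp add: Eset_def)
    ultimately have "ereal y < r" by order
    then show "y \<in> Eset l r \<and> y \<le> x1" using MInf \<open>y \<le> x1\<close> by (simp add: Eset_def)
  qed
  then show ?thesis using MInf by (auto simp: left_end_def eventually_at_bot_linorder)
qed

lemma right_ev:
  assumes "x1 \<in> Eset l r"
  shows "eventually (\<lambda>x. x \<in> Eset l r \<and> x1 \<le> x) (right_end r)"
proof (cases r)
  case (real R)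
  have R: "x1 < R" using assms real by (simp add: Eset_def)
  have "\<forall>y>x1. y < R \<longrightarrow> y \<in> Eset l r \<and> x1 \<le> y"
  proof (intro allI impI)
    fix y assume "x1 < y" "y < R"
    then have "ereal x1 < ereal y" by simp
    moreover have "l < ereal x1" using assms by (simp add: Eset_def)
    ultimately have "l < ereal y" by order
    then show "y \<in> Eset l r \<and> x1 \<le> y" using real \<open>x1 < y\<close> \<open>y < R\<close>
      by (simp add: Eset_def)
  qed
  then show ?thesis using real R by (auto simp: right_end_def eventually_at_left_field)
next
  case MInf then show ?thesis using assms by (simp add: Eset_def)
next
  case PInf
  have "\<forall>y\<ge>x1. y \<in> Eset l r \<and> x1 \<le> y"
  proof (intro allI impI)
    fix y assume "x1 \<le> y"
    then have "ereal x1 \<le> ereal y" by simp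
    moreover have "l < ereal x1" using assms by (simp add: Eset_def)
    ultimately have "l < ereal y" by order
    then show "y \<in> Eset l r \<and> x1 \<le> y" using PInf \<open>x1 \<le> y\<close> by (simp add: Eset_def)
  qed
  then show ?thesis using PInf by (auto simp: right_end_def eventually_at_top_linorder)
qed

lemma left_lim:
  fixes s :: "real \<Rightarrow> real"
  assumes sm: "strict_mono_on (Eset l r) s" and c: "c \<in> Eset l r"
  shows "Lim (left_end l) (\<lambda>x. ereal (s x)) = Inf ((\<lambda>x. ereal (s x)) ` Eset l r)"
proof (rule tendsto_Lim)
  show "\<not> trivial_limit (left_end l)" by (simp add: left_end_def)
  show "((\<lambda>x. ereal (s x)) \<longlongrightarrow> Inf ((\<lambda>x. ereal (s x)) ` Eset l r)) (left_end l)"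
  proof (rule order_tendstoI)
    fix a assume a: "a < Inf ((\<lambda>x. ereal (s x)) ` Eset l r)"
    show "eventually (\<lambda>x. a < ereal (s x)) (left_end l)"
      using left_ev[OF c]
    proof eventually_elim
      case (elim x)
      then have "Inf ((\<lambda>x. ereal (s x)) ` Eset l r) \<le> ereal (s x)" by (auto intro: INF_lower)
      then show ?case using a by order
    qed
  next
    fix a assume a: "Inf ((\<lambda>x. ereal (s x)) ` Eset l r) < a"
    then obtain x1 where x1: "x1 \<in> Eset l r" "ereal (s x1) < a" by (auto simp: Inf_less_iff)
    show "eventually (\<lambda>x. ereal (s x) < a) (left_end l)"
      using left_ev[OF x1(1)]
    proof eventually_elim
      case (elim x)
      then have "s x \<le> s x1" using sm x1(1)
        by (metis order_le_less strict_mono_onD)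
      then show ?case using x1(2) by (metis ereal_less_eq(3) order_le_less_trans)
    qed
  qed
qed

lemma right_lim:
  fixes s :: "real \<Rightarrow> real"
  assumes sm: "strict_mono_on (Eset l r) s" and c: "c \<in> Eset l r"
  shows "Lim (right_end r) (\<lambda>x. ereal (s x)) = Sup ((\<lambda>x. ereal (s x)) ` Eset l r)"
proof (rule tendsto_Lim)
  show "\<not> trivial_limit (right_end r)" by (simp add: right_end_def)
  show "((\<lambda>x. ereal (s x)) \<longlongrightarrow> Sup ((\<lambda>x. ereal (s x)) ` Eset l r)) (right_end r)"
  proof (rule order_tendstoI)
    fix a assume a: "Sup ((\<lambda>x. ereal (s x)) ` Eset l r) > a"
    then obtain x1 where x1: "x1 \<in> Eset l r" "ereal (s x1) > a" by (auto simp: less_Sup_iff)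
    show "eventually (\<lambda>x. a < ereal (s x)) (right_end r)"
      using right_ev[OF x1(1)]
    proof eventually_elim
      case (elim x)
      then have "s x1 \<le> s x" using sm x1(1)
        by (metis order_le_less strict_mono_onD)
      then show ?case using x1(2) by (metis ereal_less_eq(3) order_less_le_trans)
    qed
  next
    fix a assume a: "Sup ((\<lambda>x. ereal (s x)) ` Eset l r) < a"
    show "eventually (\<lambda>x. ereal (s x) < a) (right_end r)"
      using right_ev[OF c]
    proof eventually_elim
      case (elim x)
      then have "ereal (s x) \<le> Sup ((\<lambda>x. ereal (s x)) ` Eset l r)" by (auto intro: SUP_upper)
      then show ?case using a by order
    qed
  qed
qed

lemma image_J:
  fixes s :: "real \<Rightarrow> real"
  assumes sm: "strict_mono_on (Eset l r) s" and sc: "continuous_on (Eset l r) s"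
  shows "s ` Eset l r = {y. Inf ((\<lambda>x. ereal (s x)) ` Eset l r) < ereal y \<and> ereal y < Sup ((\<lambda>x. ereal (s x)) ` Eset l r)}"
    (is "_ = {y. ?I < ereal y \<and> ereal y < ?S}")
proof (intro equalityI subsetI)
  fix y assume "y \<in> s ` Eset l r"
  then obtain x where x: "x \<in> Eset l r" "y = s x" by auto
  obtain a where a: "a \<in> Eset l r" "a < x" using Eset_below[OF x(1)] by blast
  obtain b where b: "b \<in> Eset l r" "x < b" using Eset_above[OF x(1)] by blast
  have "?I \<le> ereal (s a)" using a by (auto intro: Inf_lower)
  also have "ereal (s a) < ereal (s x)" using sm a x by (simp add: strict_mono_onD)
  finally have 1: "?I < ereal y" using x by simp
  have "ereal (s x) < ereal (s b)" using sm b x by (simp add: strict_mono_onD)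
  also have "\<dots> \<le> ?S" using b by (auto intro: Sup_upper)
  finally have 2: "ereal y < ?S" using x by simp
  show "y \<in> {y. ?I < ereal y \<and> ereal y < ?S}" using 1 2 by simp
next
  fix y assume "y \<in> {y. ?I < ereal y \<and> ereal y < ?S}"
  then have y: "?I < ereal y" "ereal y < ?S" by auto
  obtain x1 where x1: "x1 \<in> Eset l r" "ereal (s x1) < ereal y" using y(1) by (auto simp: Inf_less_iff)
  obtain x2 where x2: "x2 \<in> Eset l r" "ereal y < ereal (s x2)" using y(2) by (auto simp: less_Sup_iff)
  have lt: "s x1 < y" "y < s x2" using x1 x2 by auto
  have "x1 \<le> x2"
  proof (rule ccontr)
    assume "\<not> x1 \<le> x2"
    then have "s x2 < s x1" using sm x1 x2 by (simp add: strict_mono_onD)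
    then show False using lt by simp
  qed
  have sub: "{x1..x2} \<subseteq> Eset l r" using Eset_conv[OF x1(1) x2(1)] by auto
  obtain x where "x1 \<le> x" "x \<le> x2" "s x = y"
    using IVT'[of s x1 y x2] lt \<open>x1 \<le> x2\<close> continuous_on_subset[OF sc sub] by auto
  then show "y \<in> s ` Eset l r" using sub by force
qed

lemma main_abstract:
  fixes s :: "real \<Rightarrow> real" and \<psi> :: "real \<Rightarrow> real"
  assumes inj: "inj_on s E" and img: "s ` E = J" and x0: "x0 \<in> E"
    and pin: "\<forall>y\<in>J. \<psi> y \<in> J" and pinv: "\<forall>y\<in>J. \<psi> (\<psi> y) = y" and pfx: "\<psi> (s x0) = s x0"
    and pform: "(\<exists>a b c. a^2 + b * c > 0 \<and> (\<forall>y\<in>J. c * y - a \<noteq> 0 \<and> \<psi> y = (a * y + b) / (c * y - a)))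
               \<or> (\<forall>y\<in>J. \<psi> y = 2 * s x0 - y)"
    and uniq: "\<And>\<phi>. \<forall>y\<in>J. \<phi> y \<in> J \<Longrightarrow> \<phi> (s x0) = s x0 \<Longrightarrow>
       (\<exists>a b c. a^2 + b * c > 0 \<and> (\<forall>y\<in>J. c * y - a \<noteq> 0 \<and> \<phi> y = (a * y + b) / (c * y - a)))
               \<or> (\<forall>y\<in>J. \<phi> y = 2 * s x0 - y) \<Longrightarrow> \<forall>y\<in>J. \<phi> y = \<psi> y"
  shows "s_inversion s E x0 I \<longleftrightarrow> (\<forall>x\<in>E. I x = inv_into E s (\<psi> (s x)))"
proof -
  have sinv_s: "\<And>x. x \<in> E \<Longrightarrow> inv_into E s (s x) = x" using inj by (simp add: inv_into_f_f)
  have sinvE: "\<And>y. y \<in> J \<Longrightarrow> inv_into E s y \<in> E" using img by (metis inv_into_into)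
  have s_sinv: "\<And>y. y \<in> J \<Longrightarrow> s (inv_into E s y) = y" using img by (metis f_inv_into_f)
  have sJ: "\<And>x. x \<in> E \<Longrightarrow> s x \<in> J" using img by blast
  show ?thesis
  proof
    assume H: "s_inversion s E x0 I"
    then have I2: "(\<exists>a b c. a^2 + b * c > 0 \<and>
         (\<forall>y\<in>J. c * y - a \<noteq> 0 \<and> s (I (inv_into E s y)) = (a * y + b) / (c * y - a)))
      \<or> (\<forall>y\<in>J. s (I (inv_into E s y)) = 2 * s x0 - y)"
      and I3: "I ` E = E" and I4: "I x0 = x0"
      unfolding s_inversion_def img by auto
    define \<phi> where "\<phi> = (\<lambda>y. s (I (inv_into E s y)))"
    have A: "\<forall>y\<in>J. \<phi> y \<in> J" using I3 sinvE sJ unfolding \<phi>_def by blast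
    have B: "\<phi> (s x0) = s x0" using I4 sinv_s[OF x0] by (simp add: \<phi>_def)
    have C: "(\<exists>a b c. a^2 + b * c > 0 \<and> (\<forall>y\<in>J. c * y - a \<noteq> 0 \<and> \<phi> y = (a * y + b) / (c * y - a)))
               \<or> (\<forall>y\<in>J. \<phi> y = 2 * s x0 - y)" using I2 unfolding \<phi>_def .
    have eq: "\<forall>y\<in>J. \<phi> y = \<psi> y" by (rule uniq[OF A B C])
    show "\<forall>x\<in>E. I x = inv_into E s (\<psi> (s x))"
    proof
      fix x assume x: "x \<in> E"
      have IE: "I x \<in> E" using I3 x by blast
      have "I x = inv_into E s (s (I x))" using sinv_s[OF IE] by simp
      also have "s (I x) = \<phi> (s x)" using sinv_s[OF x] by (simp add: \<phi>_def)
      also have "\<dots> = \<psi> (s x)" using eq sJ[OF x] by blast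
      finally show "I x = inv_into E s (\<psi> (s x))" .
    qed
  next
    assume H: "\<forall>x\<in>E. I x = inv_into E s (\<psi> (s x))"
    have IE: "\<And>x. x \<in> E \<Longrightarrow> I x \<in> E" using H sinvE pin sJ by metis
    have sI: "\<And>x. x \<in> E \<Longrightarrow> s (I x) = \<psi> (s x)" using H s_sinv pin sJ by metis
    have i1: "\<forall>x\<in>E. I (I x) = x"
    proof
      fix x assume x: "x \<in> E"
      have "I (I x) = inv_into E s (\<psi> (s (I x)))" using H IE[OF x] by blast
      also have "\<dots> = inv_into E s (s x)" using sI[OF x] pinv sJ[OF x] by simp
      finally show "I (I x) = x" using sinv_s[OF x] by simp
    qed
    have i2: "\<forall>y\<in>J. s (I (inv_into E s y)) = \<psi> y" using sI sinvE s_sinv by metis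
    have i3: "I ` E = E"
    proof
      show "I ` E \<subseteq> E" using IE by blast
      show "E \<subseteq> I ` E" using i1 IE by (metis image_eqI subsetI)
    qed
    have i4: "I x0 = x0" using H x0 pfx sinv_s[OF x0] by simp
    show "s_inversion s E x0 I"
      unfolding s_inversion_def img using i1 i3 i4 pform i2 by simp
  qed
qed
theorem proposition3:
  fixes l r :: ereal and \<sigma> b :: "real \<Rightarrow> real" and c x0 :: real and I :: "real \<Rightarrow> real"
  assumes lr: "l < r"
    and c: "c \<in> Eset l r"
    and x0: "x0 \<in> Eset l r"
    and sigma_nz: "\<forall>x\<in>Eset l r. \<sigma> x \<noteq> 0"
    and loc1: "\<forall>u\<in>Eset l r. \<forall>v\<in>Eset l r. set_integrable lborel {u..v} (\<lambda>x. 1 / (\<sigma> x)^2)"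
    and loc2: "\<forall>u\<in>Eset l r. \<forall>v\<in>Eset l r. set_integrable lborel {u..v} (\<lambda>x. b x / (\<sigma> x)^2)"
  defines "E \<equiv> Eset l r"
    and "s \<equiv> scale_fun \<sigma> b c"
    and "sl \<equiv> Lim (left_end l) (\<lambda>x. ereal (scale_fun \<sigma> b c x))"
    and "sr \<equiv> Lim (right_end r) (\<lambda>x. ereal (scale_fun \<sigma> b c x))"
  shows "s_inversion s E x0 I \<longleftrightarrow>
    (\<forall>x\<in>E. I x =
      (let L = real_of_ereal sl; R = real_of_ereal sr; S0 = s x0; sinv = inv_into E s in
       if sl \<noteq> -\<infinity> \<and> sr \<noteq> \<infinity> \<and> 2 * S0 \<noteq> L + R then
         (if S0^2 = L * R then sinv (S0^2 / s x)
          else (let A = ((2 * L * R - S0 * (L + R)) * S0) / (S0^2 - L * R);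
                    B = (2 * S0 - (L + R)) / (S0^2 - L * R)
                in sinv ((s x + A) / (B * s x - 1))))
       else if sl \<noteq> -\<infinity> \<and> sr = \<infinity> then sinv (L + (S0 - L)^2 / (s x - L))
       else if sl = -\<infinity> \<and> sr \<noteq> \<infinity> then sinv (R - (R - S0)^2 / (R - s x))
       else sinv (2 * S0 - s x)))"
  proof -
  have sm: "strict_mono_on E s" and sc: "continuous_on E s"
    using scale_props[OF c loc2] unfolding E_def s_def by auto
  have slI: "sl = Inf ((\<lambda>x. ereal (s x)) ` E)"
    unfolding sl_def E_def s_def by (rule left_lim[OF sm[unfolded E_def s_def] c])
  have srI: "sr = Sup ((\<lambda>x. ereal (s x)) ` E)"
    unfolding sr_def E_def s_def by (rule right_lim[OF sm[unfolded E_def s_def] c])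
  have img: "s ` E = Jset sl sr"
    using image_J[OF sm[unfolded E_def] sc[unfolded E_def]] slI srI unfolding E_def
    by (simp add: Jset_def)
  have inj: "inj_on s E" by (rule strict_mono_on_imp_inj_on[OF sm])
  have x0E: "x0 \<in> E" using x0 by (simp add: E_def)
  have x0J: "s x0 \<in> Jset sl sr" using img x0E by blast
  then have slS: "sl < ereal (s x0)" "ereal (s x0) < sr" by (auto simp: Jset_def)
  define S0 where "S0 = s x0"
  define J where "J = Jset sl sr"
  define \<psi> where "\<psi> = psi sl sr S0"
  have props: "(\<forall>y\<in>J. \<psi> y \<in> J) \<and> (\<forall>y\<in>J. \<psi> (\<psi> y) = y) \<and> \<psi> S0 = S0 \<and>
     ((\<exists>a b c. a^2 + b * c > 0 \<and> (\<forall>y\<in>J. c * y - a \<noteq> 0 \<and> \<psi> y = (a * y + b) / (c * y - a)))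
               \<or> (\<forall>y\<in>J. \<psi> y = 2 * S0 - y))"
  proof -
    have S0J: "S0 \<in> J" using x0J by (simp add: S0_def J_def)
    from psi_form[OF slS] show ?thesis
    proof
      assume "\<exists>p K. K > 0 \<and> p \<notin> Jset sl sr \<and> s x0 \<noteq> p \<and> mob p K (s x0) = s x0 \<and>
            (\<forall>y\<in>Jset sl sr. psi sl sr (s x0) y = mob p K y \<and> mob p K y \<in> Jset sl sr)"
      then obtain p K where K: "K > 0" and pJ: "p \<notin> J" and fx: "mob p K S0 = S0"
        and eq: "\<forall>y\<in>J. \<psi> y = mob p K y \<and> mob p K y \<in> J"
        unfolding S0_def[symmetric] J_def[symmetric] \<psi>_def[symmetric] by blast
      have yp: "\<And>y. y \<in> J \<Longrightarrow> y \<noteq> p" using pJ by blast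
      have a1: "\<forall>y\<in>J. \<psi> y \<in> J" using eq by simp
      have a2: "\<forall>y\<in>J. \<psi> (\<psi> y) = y" using eq mob_invol[OF K] yp by metis
      have a3: "\<psi> S0 = S0" using eq S0J fx by simp
      have "p^2 + (K - p^2) * 1 > 0" using K by simp
      moreover have "\<forall>y\<in>J. 1 * y - p \<noteq> 0 \<and> \<psi> y = (p * y + (K - p^2)) / (1 * y - p)"
        using eq mob_moeb[OF K] yp by metis
      ultimately show ?thesis using a1 a2 a3 by blast
    next
      assume "\<forall>y\<in>Jset sl sr. psi sl sr (s x0) y = 2 * s x0 - y \<and> 2 * s x0 - y \<in> Jset sl sr"
      then have eq: "\<forall>y\<in>J. \<psi> y = 2 * S0 - y \<and> 2 * S0 - y \<in> J"
        unfolding S0_def[symmetric] J_def[symmetric] \<psi>_def[symmetric] .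
      then show ?thesis using S0J by auto
    qed
  qed
  have uniq: "\<And>\<phi>. \<forall>y\<in>J. \<phi> y \<in> J \<Longrightarrow> \<phi> S0 = S0 \<Longrightarrow>
       (\<exists>a b c. a^2 + b * c > 0 \<and> (\<forall>y\<in>J. c * y - a \<noteq> 0 \<and> \<phi> y = (a * y + b) / (c * y - a)))
               \<or> (\<forall>y\<in>J. \<phi> y = 2 * S0 - y) \<Longrightarrow> \<forall>y\<in>J. \<phi> y = \<psi> y"
    using psi_unique[OF slS] unfolding S0_def[symmetric] J_def[symmetric] \<psi>_def[symmetric] by blast
  have main: "s_inversion s E x0 I \<longleftrightarrow> (\<forall>x\<in>E. I x = inv_into E s (\<psi> (s x)))"
    by (rule main_abstract[OF inj img[folded J_def] x0E, folded S0_def])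
       (use props uniq in auto)
  have rw: "\<And>x. (let L = real_of_ereal sl; R = real_of_ereal sr; S0 = s x0; sinv = inv_into E s in
       if sl \<noteq> -\<infinity> \<and> sr \<noteq> \<infinity> \<and> 2 * S0 \<noteq> L + R then
         (if S0^2 = L * R then sinv (S0^2 / s x)
          else (let A = ((2 * L * R - S0 * (L + R)) * S0) / (S0^2 - L * R);
                    B = (2 * S0 - (L + R)) / (S0^2 - L * R)
                in sinv ((s x + A) / (B * s x - 1))))
       else if sl \<noteq> -\<infinity> \<and> sr = \<infinity> then sinv (L + (S0 - L)^2 / (s x - L))
       else if sl = -\<infinity> \<and> sr \<noteq> \<infinity> then sinv (R - (R - S0)^2 / (R - s x))
       else sinv (2 * S0 - s x)) = inv_into E s (\<psi> (s x))"
    by (simp add: \<psi>_def psi_def S0_def Let_def)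
  show ?thesis unfolding rw by (rule main)
qed

end
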